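(* Let $\varSigma$ be a $2k$-dimensional rational sphere on vertex set $[n]$ with vertex coordinates $v_i\in\mathbb{R}^{2k+1}$ forming a linear system of parameters, and suppose $\mathcal{A}^*(\varSigma)$ has the hard Lefschetz property. Then for every subcomplex $\varDelta$ of $\varSigma$ (with the restricted coordinates), $$\kappa_k(\varSigma,\varDelta)\ \le\ \kappa_{k+1}(\varSigma,\varDelta),$$ where $\kappa_i(\varSigma,\varDelta)=\dim\mathrm{coker}\big[\mathcal{A}_i(\varDelta)\to\mathcal{A}_i(\varSigma)\big]$.
   Context: A $2k$-dimensional rational sphere is a simplicial complex which is a rational homology manifold with the rational homology of $S^{2k}$. Let $d=2k+1$. For a simplicial complex $\varGamma$ on vertices from $[n]$ with coordinates $v_i=(v_{i,1},\dots,v_{i,d})\in\mathbb{R}^d$, let $\mathbb{R}[y_1,\dots,y_n]$ be a polynomial ring on which $x_i$ acts by $\partial/\partial y_i$. The stress space $\mathcal{A}_i(\varGamma)$ is the space of homogeneous degree-$i$ polynomials $p(y)$ such that $m(\partial/\partial y)p=0$ for every monomial $m(x)$ whose support is not a face of $\varGamma$, and $\sum_{r}v_{r,j}\,\partial p/\partial y_r=0$ for $j=1,\dots,d$. Since $\varDelta\subset\varSigma$, every stress of $\varDelta$ is a stress of $\varSigma$, giving the inclusion $\mathcal{A}_i(\varDelta)\to\mathcal{A}_i(\varSigma)$. $\mathcal{A}^*(\varSigma)=\mathbb{R}[\varSigma]/(\theta_1,\dots,\theta_d)$ with $\theta_j=\sum_iv_{i,j}x_i$ and $\mathbb{R}[\varSigma]$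 the face ring. The hard Lefschetz property means there is $\ell\in\mathcal{A}^1(\varSigma)$ with multiplication by $\ell^{d-2j}:\mathcal{A}^j(\varSigma)\to\mathcal{A}^{d-j}(\varSigma)$ an isomorphism for all $j\le d/2$. *)

theory Defs
  imports "HOL-Analysis.Analysis" "HOL-Library.Poly_Mapping" "HOL-Analysis.Finite_Function_Topology"
begin

definition simplicial_complex :: "nat \<Rightarrow> nat set set \<Rightarrow> bool" where
  "simplicial_complex n K \<longleftrightarrow> {} \<in> K \<and> (\<forall>\<sigma>\<in>K. \<sigma> \<subseteq> {1..n}) \<and>
     (\<forall>\<sigma>\<in>K. \<forall>\<tau>. \<tau> \<subseteq> \<sigma> \<longrightarrow> \<tau> \<in> K)"

definition link :: "nat set set \<Rightarrow> nat set \<Rightarrow> nat set set" where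
  "link K \<sigma> = {\<tau> \<in> K. \<tau> \<inter> \<sigma> = {} \<and> \<tau> \<union> \<sigma> \<in> K}"

text \<open>Chains supported on faces with exactly m vertices (simplicial degree m - 1;
  m = 0 is the augmentation degree -1).\<close>
definition chains :: "nat set set \<Rightarrow> nat \<Rightarrow> (nat set \<Rightarrow>\<^sub>0 real) set" where
  "chains K m = {c. \<forall>\<tau>\<in>Poly_Mapping.keys c. \<tau> \<in> K \<and> card \<tau> = m}"

text \<open>Simplicial boundary with the orientation induced by the order of the vertices:
  the coefficient of [tau] in the boundary of [tau + v] is (-1)^(number of u in tau with u < v).\<close>
definition boundary :: "nat set set \<Rightarrow> (nat set \<Rightarrow>\<^sub>0 real) \<Rightarrow> (nat set \<Rightarrow>\<^sub>0 real)" where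
  "boundary K c = Abs_poly_mapping (\<lambda>\<tau>. if \<tau> \<in> K then
      (\<Sum>v\<in>{v. v \<notin> \<tau> \<and> insert v \<tau> \<in> K}. (-1) ^ card {u\<in>\<tau>. u < v} * Poly_Mapping.lookup c (insert v \<tau>))
    else 0)"

text \<open>Reduced Betti number in simplicial degree m - 1.\<close>
definition rbetti :: "nat set set \<Rightarrow> nat \<Rightarrow> nat" where
  "rbetti K m = dim {c \<in> chains K m. boundary K c = 0} - dim (boundary K ` chains K (Suc m))"

text \<open>K has the (reduced) homology of the sphere S^(m-1): reduced Betti number 1 in
  simplicial degree m - 1 and 0 elsewhere.\<close>
definition homology_sphere_idx :: "nat set set \<Rightarrow> nat \<Rightarrow> bool" where
  "homology_sphere_idx K m \<longleftrightarrow> (\<forall>j. rbetti K j = (if j = m then 1 else 0))"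

definition homology_manifold :: "nat \<Rightarrow> nat set set \<Rightarrow> nat \<Rightarrow> bool" where
  "homology_manifold n K e \<longleftrightarrow> simplicial_complex n K \<and>
     (\<forall>\<sigma>\<in>K. \<sigma> \<noteq> {} \<longrightarrow> card \<sigma> \<le> e + 1 \<and> homology_sphere_idx (link K \<sigma>) (e + 1 - card \<sigma>))"

definition rational_sphere :: "nat \<Rightarrow> nat \<Rightarrow> nat set set \<Rightarrow> bool" where
  "rational_sphere n k K \<longleftrightarrow> homology_manifold n K (2*k) \<and> homology_sphere_idx K (2*k+1)
     \<and> (\<forall>i\<in>{1..n}. {i} \<in> K)"

type_synonym mon = "nat \<Rightarrow>\<^sub>0 nat"
type_synonym rpoly = "mon \<Rightarrow>\<^sub>0 real"

definition mdeg :: "mon \<Rightarrow> nat" where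
  "mdeg \<alpha> = (\<Sum>r\<in>Poly_Mapping.keys \<alpha>. Poly_Mapping.lookup \<alpha> r)"

definition homog :: "nat \<Rightarrow> nat \<Rightarrow> rpoly set" where
  "homog n i = {p. \<forall>\<alpha>\<in>Poly_Mapping.keys p. mdeg \<alpha> = i \<and> Poly_Mapping.keys \<alpha> \<subseteq> {1..n}}"

definition var :: "nat \<Rightarrow> rpoly" where
  "var i = Poly_Mapping.single (Poly_Mapping.single i 1) 1"

definition monom :: "mon \<Rightarrow> rpoly" where
  "monom \<beta> = Poly_Mapping.single \<beta> 1"

definition pd :: "nat \<Rightarrow> rpoly \<Rightarrow> rpoly" where
  "pd r p = Abs_poly_mapping (\<lambda>\<alpha>. real (Poly_Mapping.lookup \<alpha> r + 1) * Poly_Mapping.lookup p (\<alpha> + Poly_Mapping.single r 1))"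

text \<open>The differential operator m(d/dy) for the monomial m = x^beta.\<close>
definition mon_diff :: "mon \<Rightarrow> rpoly \<Rightarrow> rpoly" where
  "mon_diff \<beta> p = fold (\<lambda>r q. (pd r ^^ Poly_Mapping.lookup \<beta> r) q) (sorted_list_of_set (Poly_Mapping.keys \<beta>)) p"

definition ideal_gen :: "rpoly set \<Rightarrow> rpoly set" where
  "ideal_gen G = {p. \<exists>F c. finite F \<and> F \<subseteq> G \<and> p = (\<Sum>g\<in>F. c g * g)}"

text \<open>v i j is the j-th coordinate (j in 1..d) of vertex i.\<close>
definition theta :: "nat \<Rightarrow> (nat \<Rightarrow> nat \<Rightarrow> real) \<Rightarrow> nat \<Rightarrow> rpoly" where
  "theta n v j = (\<Sum>i\<in>{1..n}. v i j *\<^sub>R var i)"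

text \<open>The ideal I_K + (theta_1,...,theta_d); A^*(K) is the polynomial ring modulo it.\<close>
definition AJ :: "nat \<Rightarrow> nat set set \<Rightarrow> nat \<Rightarrow> (nat \<Rightarrow> nat \<Rightarrow> real) \<Rightarrow> rpoly set" where
  "AJ n K d v = ideal_gen ({monom \<beta> | \<beta>. Poly_Mapping.keys \<beta> \<subseteq> {1..n} \<and> Poly_Mapping.keys \<beta> \<notin> K}
                          \<union> {theta n v j | j. j \<in> {1..d}})"

text \<open>theta_1..theta_d is a linear system of parameters: R[K]/(theta) is finite dimensional.\<close>
definition is_lsop :: "nat \<Rightarrow> nat set set \<Rightarrow> nat \<Rightarrow> (nat \<Rightarrow> nat \<Rightarrow> real) \<Rightarrow> bool" where
  "is_lsop n K d v \<longleftrightarrow> (\<exists>N. \<forall>m>N. homog n m \<subseteq> AJ n K d v)"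

definition hard_lefschetz :: "nat \<Rightarrow> nat set set \<Rightarrow> nat \<Rightarrow> (nat \<Rightarrow> nat \<Rightarrow> real) \<Rightarrow> bool" where
  "hard_lefschetz n K d v \<longleftrightarrow> (\<exists>l\<in>homog n 1. \<forall>j. 2*j \<le> d \<longrightarrow>
     (\<forall>p\<in>homog n j. l ^ (d - 2*j) * p \<in> AJ n K d v \<longrightarrow> p \<in> AJ n K d v) \<and>
     (\<forall>q\<in>homog n (d - j). \<exists>p\<in>homog n j. q - l ^ (d - 2*j) * p \<in> AJ n K d v))"

definition stresses :: "nat \<Rightarrow> nat set set \<Rightarrow> nat \<Rightarrow> (nat \<Rightarrow> nat \<Rightarrow> real) \<Rightarrow> nat \<Rightarrow> rpoly set" where
  "stresses n K d v i = {p \<in> homog n i.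
      (\<forall>\<beta>. Poly_Mapping.keys \<beta> \<notin> K \<longrightarrow> mon_diff \<beta> p = 0) \<and>
      (\<forall>j\<in>{1..d}. (\<Sum>r\<in>{1..n}. v r j *\<^sub>R pd r p) = 0)}"

text \<open>kappa_i(S, D) = dim coker [A_i(D) \<rightarrow> A_i(S)] (the map is an inclusion).\<close>
definition kappa :: "nat \<Rightarrow> nat set set \<Rightarrow> nat set set \<Rightarrow> nat \<Rightarrow> (nat \<Rightarrow> nat \<Rightarrow> real) \<Rightarrow> nat \<Rightarrow> nat" where
  "kappa n S D d v i = dim (stresses n S d v i) - dim (stresses n D d v i)"

end

theory Submission
  imports Defs
begin

lemma fd_basis:
  fixes U :: "'a::real_vector set"
  assumes "U \<subseteq> span Mf" "finite Mf"
  obtains Bs where "finite Bs" "Bs \<subseteq> U" "independent Bs" "U \<subseteq> span Bs" "card Bs = dim U"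
proof -
  obtain B where B: "B \<subseteq> U" "independent B" "U \<subseteq> span B" "card B = dim U"
    using real_vector.basis_exists by blast
  have "finite B" using real_vector.independent_span_bound[OF assms(2) B(2)] B(1) assms(1) by blast
  then show ?thesis using that B by blast
qed

lemma fd_indep_card:
  fixes U :: "'a::real_vector set"
  assumes "U \<subseteq> span Mf" "finite Mf" "independent T" "T \<subseteq> U"
  shows "finite T \<and> card T \<le> dim U"
proof -
  obtain Bs where Bs: "finite Bs" "Bs \<subseteq> U" "independent Bs" "U \<subseteq> span Bs" "card Bs = dim U"
    using fd_basis[OF assms(1,2)] by blast
  show ?thesis using real_vector.independent_span_bound[OF Bs(1) assms(3)] assms(4) Bs(4,5) by auto
qed

lemma fd_dim_mono:
  fixes U :: "'a::real_vector set"
  assumes "X \<subseteq> span Mf" "finite Mf" "U \<subseteq> X"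
  shows "dim U \<le> dim X"
proof -
  obtain Bs where Bs: "finite Bs" "Bs \<subseteq> X" "independent Bs" "X \<subseteq> span Bs" "card Bs = dim X"
    using fd_basis[OF assms(1,2)] by blast
  show ?thesis using real_vector.dim_le_card[of U Bs] Bs assms(3) by auto
qed

lemma fd_dim_strict:
  fixes U :: "'a::real_vector set"
  assumes "V \<subseteq> span Mf" "finite Mf" "subspace U" "U \<subseteq> V" "\<not> V \<subseteq> U"
  shows "dim U < dim V"
proof -
  have "U \<subseteq> span Mf" using assms by blast
  then obtain Bs where Bs: "finite Bs" "Bs \<subseteq> U" "independent Bs" "U \<subseteq> span Bs" "card Bs = dim U"
    using fd_basis[OF _ assms(2)] by blast
  obtain x where x: "x \<in> V" "x \<notin> U" using assms by blast
  have "span Bs \<subseteq> U" using Bs(2) assms(3) real_vector.span_minimal by blast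
  then have xs: "x \<notin> span Bs" using x by blast
  then have "independent (insert x Bs)" using real_vector.independent_insertI Bs by blast
  moreover have "insert x Bs \<subseteq> V" using x Bs assms by blast
  ultimately have "card (insert x Bs) \<le> dim V" using fd_indep_card[OF assms(1,2)] by blast
  moreover have "card (insert x Bs) = card Bs + 1" using xs Bs(1) real_vector.span_base
    by (metis Suc_eq_plus1 card_insert_disjoint)
  ultimately show ?thesis using Bs(5) by simp
qed

lemma rank_nullity_le:
  fixes f :: "'a::real_vector \<Rightarrow> 'b::real_vector"
  assumes "A \<subseteq> span Mf" "finite Mf" "subspace A" "linear f"
  shows "dim A \<le> dim (f ` A) + dim {x\<in>A. f x = 0}"
proof -
  have "{x\<in>A. f x = 0} \<subseteq> span Mf" using assms by blast
  then obtain K where K: "finite K" "K \<subseteq> {x\<in>A. f x = 0}" "independent K"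
      "{x\<in>A. f x = 0} \<subseteq> span K" "card K = dim {x\<in>A. f x = 0}"
    using fd_basis[OF _ assms(2)] by blast
  have fA: "f ` A \<subseteq> span (f ` Mf)"
    using assms(1) span_linear_image[OF assms(4), of Mf] by blast
  obtain C where C: "finite C" "C \<subseteq> f ` A" "independent C" "f ` A \<subseteq> span C" "card C = dim (f ` A)"
    using fd_basis[OF fA] assms(2) by blast
  define g where "g c = (SOME a. a \<in> A \<and> f a = c)" for c
  have g: "g c \<in> A \<and> f (g c) = c" if "c \<in> C" for c
    unfolding g_def by (rule someI_ex) (use that C(2) in blast)
  define P where "P = g ` C"
  have fP: "f ` P = C" unfolding P_def using g by force
  have PA: "P \<subseteq> A" unfolding P_def using g by blast
  have spanPA: "span P \<subseteq> A" using PA assms(3) real_vector.span_minimal by blast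
  have "A \<subseteq> span (P \<union> K)"
  proof
    fix a assume a: "a \<in> A"
    have "f a \<in> span C" using a C(4) by blast
    then have "f a \<in> f ` span P" using span_linear_image[OF assms(4), of P] fP by simp
    then obtain p where p: "p \<in> span P" "f p = f a" by (metis imageE)
    have "a - p \<in> A" using a p spanPA assms(3) real_vector.subspace_diff by blast
    moreover have "f (a - p) = 0" using p linear_diff[OF assms(4)] by simp
    ultimately have "a - p \<in> span K" using K(4) by blast
    then have "a - p \<in> span (P \<union> K)" using real_vector.span_mono[of K "P \<union> K"] by blast
    moreover have "p \<in> span (P \<union> K)" using p real_vector.span_mono[of P "P \<union> K"] by blast
    ultimately have "(a - p) + p \<in> span (P \<union> K)" using real_vector.span_add by blast
    then show "a \<in> span (P \<union> K)" by simp
  qed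
  moreover have "finite (P \<union> K)" using C(1) K(1) P_def by simp
  ultimately have "dim A \<le> card (P \<union> K)" using real_vector.dim_le_card by blast
  also have "\<dots> \<le> card P + card K" by (rule card_Un_le)
  also have "card P \<le> card C" unfolding P_def using C(1) card_image_le by blast
  finally show ?thesis using C(5) K(5) by simp
qed

lemma rank_nullity_ge:
  fixes f :: "'a::real_vector \<Rightarrow> 'b::real_vector"
  assumes "A \<subseteq> span Mf" "finite Mf" "subspace A" "linear f"
  shows "dim (f ` A) + dim {x\<in>A. f x = 0} \<le> dim A"
proof -
  have "{x\<in>A. f x = 0} \<subseteq> span Mf" using assms by blast
  then obtain K where K: "finite K" "K \<subseteq> {x\<in>A. f x = 0}" "independent K"
      "{x\<in>A. f x = 0} \<subseteq> span K" "card K = dim {x\<in>A. f x = 0}"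
    using fd_basis[OF _ assms(2)] by blast
  obtain C where C: "K \<subseteq> C" "C \<subseteq> A" "independent C" "A \<subseteq> span C"
    using real_vector.maximal_independent_subset_extend[of K A] K by blast
  have Cf: "finite C" "card C \<le> dim A" using fd_indep_card[OF assms(1,2) C(3,2)] by auto
  have cardC: "card C = dim A" using real_vector.basis_card_eq_dim[OF C(2,4,3)] .
  have "f ` A \<subseteq> f ` span C" using C(4) by blast
  also have "\<dots> = span (f ` C)" using span_linear_image[OF assms(4)] by simp
  also have "f ` C \<subseteq> insert 0 (f ` (C - K))" using C K(2) by blast
  then have "span (f ` C) \<subseteq> span (f ` (C - K))"
    using real_vector.span_mono real_vector.span_insert_0 by metis
  finally have "dim (f ` A) \<le> card (f ` (C - K))" using real_vector.dim_le_card Cf(1) by blast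
  also have "\<dots> \<le> card (C - K)" using Cf(1) card_image_le by blast
  also have "\<dots> = card C - card K" using C(1) K(1) card_Diff_subset by blast
  finally show ?thesis using cardC K(5) C(1) Cf(1) card_mono[of C K] by linarith
qed

lemma rank_nullity:
  fixes f :: "'a::real_vector \<Rightarrow> 'b::real_vector"
  assumes "A \<subseteq> span Mf" "finite Mf" "subspace A" "linear f"
  shows "dim A = dim (f ` A) + dim {x\<in>A. f x = 0}"
  using rank_nullity_le[OF assms] rank_nullity_ge[OF assms] by linarith

locale bilf =
  fixes H :: "'a::real_vector set" and B :: "'a \<Rightarrow> 'a \<Rightarrow> real" and Mf :: "'a set"
  assumes H_sub: "subspace H" and H_fd: "H \<subseteq> span Mf" and Mf_fin: "finite Mf"
    and B_add: "\<And>x y z. B (x + y) z = B x z + B y z"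
    and B_scale: "\<And>c x z. B (c *\<^sub>R x) z = c * B x z"
    and B_sym: "\<And>x y. B x y = B y x"
    and B_pos: "\<And>x. x \<in> H \<Longrightarrow> x \<noteq> 0 \<Longrightarrow> B x x > 0"
begin

lemma B_add2: "B z (x + y) = B z x + B z y"
proof -
  have "B z (x+y) = B (x+y) z" by (rule B_sym)
  also have "\<dots> = B x z + B y z" by (rule B_add)
  also have "\<dots> = B z x + B z y" using B_sym[of x z] B_sym[of y z] by simp
  finally show ?thesis .
qed
lemma B_scale2: "B z (c *\<^sub>R x) = c * B z x"
proof -
  have "B z (c *\<^sub>R x) = B (c *\<^sub>R x) z" by (rule B_sym)
  also have "\<dots> = c * B x z" by (rule B_scale)
  also have "\<dots> = c * B z x" using B_sym[of x z] by simp
  finally show ?thesis .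
qed
lemma B_diff2: "B z (x - y) = B z x - B z y"
  using B_add2[of z x "-y"] B_scale2[of z "-1" y] by simp

lemma B_span:
  assumes "\<forall>s\<in>S. B x s = 0" "y \<in> span S"
  shows "B x y = 0"
proof -
  have B0: "B x 0 = 0" using B_scale2[of x 0 0] by simp
  have "subspace {y. B x y = 0}"
    unfolding subspace_def
  proof (intro conjI ballI allI)
    show "0 \<in> {y. B x y = 0}" using B0 by simp
  next
    fix a b assume "a \<in> {y. B x y = 0}" "b \<in> {y. B x y = 0}"
    then show "a + b \<in> {y. B x y = 0}" using B_add2[of x a b] by simp
  next
    fix c a assume "a \<in> {y. B x y = 0}"
    then show "c *\<^sub>R a \<in> {y. B x y = 0}" using B_scale2[of x c a] by simp
  qed
  moreover have "S \<subseteq> {y. B x y = 0}" using assms(1) by blast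
  ultimately have "span S \<subseteq> {y. B x y = 0}" using real_vector.span_minimal by blast
  then show ?thesis using assms(2) by blast
qed

lemma orth_exists:
  assumes "subspace A" "subspace V" "V \<subseteq> A" "A \<subseteq> H" "\<not> A \<subseteq> V"
  shows "\<exists>q\<in>A. q \<noteq> 0 \<and> (\<forall>w\<in>V. B q w = 0)"
proof -
  have Afd: "A \<subseteq> span Mf" using assms H_fd by blast
  have Vfd: "V \<subseteq> span Mf" using Afd assms(3) by (rule order_trans[rotated])
  obtain Bs where Bs: "finite Bs" "Bs \<subseteq> V" "independent Bs" "V \<subseteq> span Bs" "card Bs = dim V"
    using fd_basis[OF Vfd Mf_fin] by blast
  define f where "f x = (\<Sum>u\<in>Bs. B x u *\<^sub>R u)" for x
  have lin: "linear f"
  proof (rule linearI)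
    fix b1 b2 show "f (b1 + b2) = f b1 + f b2"
      unfolding f_def B_add scaleR_add_left by (rule sum.distrib)
  next
    fix r b show "f (r *\<^sub>R b) = r *\<^sub>R f b"
      unfolding f_def B_scale scaleR_sum_right by simp
  qed
  have "f x \<in> span Bs" for x unfolding f_def
    by (intro real_vector.span_sum real_vector.span_scale real_vector.span_base)
  then have "f ` A \<subseteq> span Bs" by blast
  then have d1: "dim (f ` A) \<le> dim V" using real_vector.dim_le_card[of "f ` A" Bs] Bs(1,5) by simp
  have d2: "dim V < dim A" using fd_dim_strict[OF Afd Mf_fin assms(2,3,5)] .
  have rn: "dim A = dim (f ` A) + dim {x\<in>A. f x = 0}" using rank_nullity[OF Afd Mf_fin assms(1) lin] .
  have "\<not> {x\<in>A. f x = 0} \<subseteq> {0}"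
  proof
    assume "{x\<in>A. f x = 0} \<subseteq> {0}"
    then have "{x\<in>A. f x = 0} \<subseteq> span {}" by simp
    then have "dim {x\<in>A. f x = 0} \<le> card {}" using real_vector.dim_le_card[of "{x\<in>A. f x = 0}" "{}"] by simp
    then have "dim {x\<in>A. f x = 0} = 0" by simp
    then show False using rn d1 d2 by linarith
  qed
  then obtain q where q: "q \<in> A" "f q = 0" "q \<noteq> 0" by blast
  have "\<forall>u\<in>Bs. B q u = 0"
  proof (rule ccontr)
    assume "\<not> (\<forall>u\<in>Bs. B q u = 0)"
    then have "\<exists>u. (\<exists>v\<in>Bs. u v \<noteq> 0) \<and> (\<Sum>v\<in>Bs. u v *\<^sub>R v) = 0"
      using q(2) unfolding f_def by (intro exI[of _ "\<lambda>u. B q u"] conjI) simp_all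
    then have "dependent Bs" using real_vector.dependent_finite[OF Bs(1)] by simp
    then show False using Bs(3) by simp
  qed
  note Bq = this
  have "\<forall>w\<in>V. B q w = 0"
  proof
    fix w assume "w \<in> V"
    then have "w \<in> span Bs" using Bs(4) by blast
    then show "B q w = 0" by (rule B_span[OF Bq])
  qed
  then show ?thesis using q by blast
qed

lemma double_ann:
  assumes "subspace W" "W \<subseteq> H" "x \<in> H" "\<forall>p\<in>H. (\<forall>w\<in>W. B w p = 0) \<longrightarrow> B x p = 0"
  shows "x \<in> W"
proof (rule ccontr)
  assume xW: "x \<notin> W"
  define A where "A = span (insert x W)"
  have sA: "subspace A" unfolding A_def by simp
  have "insert x W \<subseteq> H" using assms(2,3) by blast
  then have AH: "A \<subseteq> H" unfolding A_def using real_vector.span_minimal H_sub by blast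
  have WA: "W \<subseteq> A" unfolding A_def using real_vector.span_superset by blast
  have "\<not> A \<subseteq> W" unfolding A_def using xW real_vector.span_superset by blast
  then obtain q where q: "q \<in> A" "q \<noteq> 0" "\<forall>w\<in>W. B q w = 0"
    using orth_exists[OF sA assms(1) WA AH] by blast
  have qH: "q \<in> H" using q AH by blast
  have "\<forall>w\<in>W. B w q = 0" using q(3) B_sym by simp
  then have "B x q = 0" using assms(4) qH by blast
  obtain c where c: "q - c *\<^sub>R x \<in> span W" using q(1) unfolding A_def real_vector.span_insert by blast
  then have cW: "q - c *\<^sub>R x \<in> W" using assms(1) real_vector.span_eq_iff by blast
  have "B q q = B q (q - c *\<^sub>R x) + c * B q x" using B_diff2 B_scale2 by simp
  also have "\<dots> = 0"
  proof -
    have "B q (q - c *\<^sub>R x) = 0" using q(3) cW by blast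
    moreover have "B q x = 0" using \<open>B x q = 0\<close> B_sym[of q x] by simp
    ultimately show ?thesis by simp
  qed
  finally show False using B_pos[OF qH q(2)] by simp
qed

end

definition ee :: "nat \<Rightarrow> mon" where "ee r = Poly_Mapping.single r 1"

lemma lookup_scaleR_pm: "Poly_Mapping.lookup (c *\<^sub>R (x::rpoly)) a = c * Poly_Mapping.lookup x a"
proof -
  have "finite {a. c * Poly_Mapping.lookup x a \<noteq> 0}"
    by (rule finite_subset[of _ "Poly_Mapping.keys x"]) (auto simp: in_keys_iff)
  then show ?thesis unfolding scaleR_poly_mapping_def by simp
qed

lemma keys_scaleR_pm: "Poly_Mapping.keys (c *\<^sub>R (x::rpoly)) \<subseteq> Poly_Mapping.keys x"
  by (auto simp: in_keys_iff lookup_scaleR_pm)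

lemma lookup_monom: "Poly_Mapping.lookup (monom \<beta>) \<alpha> = (if \<alpha> = \<beta> then 1 else 0)"
  unfolding monom_def lookup_single when_def by auto

lemma keys_monom: "Poly_Mapping.keys (monom \<beta>) = {\<beta>}"
  unfolding monom_def by simp

lemma pm_expand: "p = (\<Sum>\<alpha>\<in>Poly_Mapping.keys p. Poly_Mapping.lookup p \<alpha> *\<^sub>R monom \<alpha>)"
proof (rule poly_mapping_eqI)
  fix k
  have "Poly_Mapping.lookup (\<Sum>\<alpha>\<in>Poly_Mapping.keys p. Poly_Mapping.lookup p \<alpha> *\<^sub>R monom \<alpha>) k
      = (\<Sum>\<alpha>\<in>Poly_Mapping.keys p. if \<alpha> = k then Poly_Mapping.lookup p \<alpha> else 0)"
    unfolding lookup_sum lookup_scaleR_pm lookup_monom by (intro sum.cong) auto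
  also have "\<dots> = (if k \<in> Poly_Mapping.keys p then Poly_Mapping.lookup p k else 0)"
    using sum.delta[of "Poly_Mapping.keys p" k "Poly_Mapping.lookup p"] by simp
  also have "\<dots> = Poly_Mapping.lookup p k" by (auto simp: in_keys_iff)
  finally show "Poly_Mapping.lookup p k = Poly_Mapping.lookup (\<Sum>\<alpha>\<in>Poly_Mapping.keys p. Poly_Mapping.lookup p \<alpha> *\<^sub>R monom \<alpha>) k"
    by simp
qed

lemma monom_mult: "monom a * monom b = monom (a + b)"
  unfolding monom_def by (simp add: mult_single)

lemma scaleR_conv_mult: "c *\<^sub>R (x::rpoly) = Poly_Mapping.single 0 c * x"
proof -
  have "c *\<^sub>R x = Poly_Mapping.map ((*) c) x"
    by (rule poly_mapping_eqI) (simp add: lookup_scaleR_pm map.rep_eq when_def)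
  then show ?thesis by (simp add: mult_map_scale_conv_mult)
qed

lemma scaleR_mult_left_pm: "(c *\<^sub>R (a::rpoly)) * b = c *\<^sub>R (a * b)"
  unfolding scaleR_conv_mult by (simp add: mult.assoc)

lemma scaleR_mult_right_pm: "(a::rpoly) * (c *\<^sub>R b) = c *\<^sub>R (a * b)"
  using scaleR_mult_left_pm[of c b a] by (simp add: mult.commute)

lemma var_ee: "var r = monom (ee r)"
  unfolding var_def monom_def ee_def by simp

lemma mdeg_superset:
  assumes "finite X" "Poly_Mapping.keys \<alpha> \<subseteq> X"
  shows "mdeg \<alpha> = (\<Sum>r\<in>X. Poly_Mapping.lookup \<alpha> r)"
  unfolding mdeg_def by (rule sum.mono_neutral_left) (use assms in \<open>auto simp: in_keys_iff\<close>)

lemma keys_add_mon: "Poly_Mapping.keys ((a::mon) + b) = Poly_Mapping.keys a \<union> Poly_Mapping.keys b"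
  by (auto simp: in_keys_iff lookup_add)

lemma mdeg_add: "mdeg (a + b) = mdeg a + mdeg b"
proof -
  let ?X = "Poly_Mapping.keys a \<union> Poly_Mapping.keys b"
  have "mdeg (a + b) = (\<Sum>r\<in>?X. Poly_Mapping.lookup (a+b) r)"
    by (rule mdeg_superset) (auto simp: keys_add_mon)
  also have "\<dots> = (\<Sum>r\<in>?X. Poly_Mapping.lookup a r) + (\<Sum>r\<in>?X. Poly_Mapping.lookup b r)"
    by (simp add: lookup_add sum.distrib)
  also have "\<dots> = mdeg a + mdeg b"
    using mdeg_superset[of ?X a] mdeg_superset[of ?X b] by simp
  finally show ?thesis .
qed

lemma keys_ee: "Poly_Mapping.keys (ee r) = {r}" unfolding ee_def by simp
lemma lookup_ee: "Poly_Mapping.lookup (ee r) s = (if s = r then 1 else 0)"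
  unfolding ee_def lookup_single when_def by auto

lemma mdeg_ee: "mdeg (ee r) = 1"
  unfolding mdeg_def keys_ee by (simp add: lookup_ee)

lemma lookup_le_mdeg: "Poly_Mapping.lookup \<alpha> r \<le> mdeg \<alpha>"
proof (cases "r \<in> Poly_Mapping.keys \<alpha>")
  case True
  then show ?thesis unfolding mdeg_def by (intro member_le_sum) auto
next
  case False
  then show ?thesis by (simp add: in_keys_iff)
qed

lemma mdeg_zero: "mdeg \<alpha> = 0 \<Longrightarrow> \<alpha> = 0"
proof -
  assume "mdeg \<alpha> = 0"
  then have "Poly_Mapping.lookup \<alpha> r = 0" for r using lookup_le_mdeg[of \<alpha> r] by simp
  then show "\<alpha> = 0" by (intro poly_mapping_eqI) simp
qed

lemma mdeg_one:
  assumes "mdeg \<alpha> = 1" shows "\<exists>r. \<alpha> = ee r"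
proof -
  have "\<alpha> \<noteq> 0" using assms unfolding mdeg_def by auto
  then have "Poly_Mapping.keys \<alpha> \<noteq> {}" by simp
  then obtain r where r: "r \<in> Poly_Mapping.keys \<alpha>" by blast
  have "(\<Sum>r\<in>Poly_Mapping.keys \<alpha>. (1::nat)) \<le> (\<Sum>r\<in>Poly_Mapping.keys \<alpha>. Poly_Mapping.lookup \<alpha> r)"
    by (rule sum_mono) (auto simp: in_keys_iff)
  then have "card (Poly_Mapping.keys \<alpha>) \<le> 1" using assms unfolding mdeg_def by simp
  moreover have "card (Poly_Mapping.keys \<alpha>) > 0" using r card_gt_0_iff[of "Poly_Mapping.keys \<alpha>"] by auto
  ultimately have "card (Poly_Mapping.keys \<alpha>) = 1" by simp
  then obtain x where x: "Poly_Mapping.keys \<alpha> = {x}" by (rule card_1_singletonE)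
  then have kr: "Poly_Mapping.keys \<alpha> = {r}" using r by simp
  then have "mdeg \<alpha> = Poly_Mapping.lookup \<alpha> r" unfolding mdeg_def by simp
  then have lr: "Poly_Mapping.lookup \<alpha> r = 1" using assms by simp
  have "\<alpha> = ee r"
  proof (rule poly_mapping_eqI)
    fix s show "Poly_Mapping.lookup \<alpha> s = Poly_Mapping.lookup (ee r) s"
    proof (cases "s = r")
      case True then show ?thesis using lr by (simp add: lookup_ee)
    next
      case False then have "s \<notin> Poly_Mapping.keys \<alpha>" using kr by simp
      then show ?thesis using False by (simp add: lookup_ee in_keys_iff)
    qed
  qed
  then show ?thesis by blast
qed

definition Mset :: "nat \<Rightarrow> nat \<Rightarrow> mon set" where
  "Mset n i = {\<alpha>. mdeg \<alpha> = i \<and> Poly_Mapping.keys \<alpha> \<subseteq> {1..n}}"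

lemma finite_Mset: "finite (Mset n i)"
proof -
  let ?f = "\<lambda>\<alpha>. restrict (Poly_Mapping.lookup \<alpha>) {1..n}"
  have "inj_on ?f (Mset n i)"
  proof (rule inj_onI)
    fix a b assume a: "a \<in> Mset n i" and b: "b \<in> Mset n i" and e: "?f a = ?f b"
    show "a = b"
    proof (rule poly_mapping_eqI)
      fix r show "Poly_Mapping.lookup a r = Poly_Mapping.lookup b r"
      proof (cases "r \<in> {1..n}")
        case True then show ?thesis using fun_cong[OF e, of r] by simp
      next
        case False then have "r \<notin> Poly_Mapping.keys a" "r \<notin> Poly_Mapping.keys b"
          using a b unfolding Mset_def by auto
        then show ?thesis by (simp add: in_keys_iff)
      qed
    qed
  qed
  moreover have "?f ` Mset n i \<subseteq> PiE {1..n} (\<lambda>_. {0..i})"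
    using lookup_le_mdeg unfolding Mset_def by (auto simp: PiE_def Pi_def)
  then have "finite (?f ` Mset n i)" by (rule finite_subset) (simp add: finite_PiE)
  ultimately show ?thesis using finite_image_iff by blast
qed

lemma Mset_add_ee: "\<gamma> \<in> Mset n i \<Longrightarrow> r \<in> {1..n} \<Longrightarrow> \<gamma> + ee r \<in> Mset n (Suc i)"
  unfolding Mset_def by (auto simp: mdeg_add mdeg_ee keys_add_mon keys_ee)

lemma Mset_add_ee_D: "\<gamma> + ee r \<in> Mset n (Suc i) \<Longrightarrow> \<gamma> \<in> Mset n i"
  unfolding Mset_def by (auto simp: mdeg_add mdeg_ee keys_add_mon keys_ee)

definition mfact :: "mon \<Rightarrow> real" where
  "mfact \<alpha> = (\<Prod>r\<in>Poly_Mapping.keys \<alpha>. fact (Poly_Mapping.lookup \<alpha> r))"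

lemma mfact_pos: "mfact \<alpha> > 0"
  unfolding mfact_def by (intro prod_pos) simp

lemma mfact_superset:
  assumes "finite X" "Poly_Mapping.keys \<alpha> \<subseteq> X"
  shows "mfact \<alpha> = (\<Prod>r\<in>X. fact (Poly_Mapping.lookup \<alpha> r))"
  unfolding mfact_def by (rule prod.mono_neutral_left) (use assms in \<open>auto simp: in_keys_iff\<close>)

lemma mfact_add_ee: "mfact (\<gamma> + ee r) = mfact \<gamma> * real (Poly_Mapping.lookup \<gamma> r + 1)"
proof -
  let ?X = "insert r (Poly_Mapping.keys \<gamma>)"
  have fX: "finite ?X" by simp
  have l: "Poly_Mapping.lookup (\<gamma> + ee r) s = Poly_Mapping.lookup \<gamma> s + (if s = r then 1 else 0)" for s
    by (simp add: lookup_add lookup_ee)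
  have "mfact (\<gamma> + ee r) = (\<Prod>s\<in>?X. fact (Poly_Mapping.lookup (\<gamma> + ee r) s))"
    by (rule mfact_superset) (auto simp: keys_add_mon keys_ee)
  also have "\<dots> = fact (Poly_Mapping.lookup (\<gamma> + ee r) r) * (\<Prod>s\<in>?X-{r}. fact (Poly_Mapping.lookup (\<gamma> + ee r) s))"
    using prod.remove[OF fX, of r] by simp
  also have "(\<Prod>s\<in>?X-{r}. fact (Poly_Mapping.lookup (\<gamma> + ee r) s)) = (\<Prod>s\<in>?X-{r}. fact (Poly_Mapping.lookup \<gamma> s) :: real)"
    by (intro prod.cong) (auto simp: l)
  also have "fact (Poly_Mapping.lookup (\<gamma> + ee r) r) = (real (Poly_Mapping.lookup \<gamma> r + 1)) * (fact (Poly_Mapping.lookup \<gamma> r) :: real)"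
    by (simp add: l)
  also have "mfact \<gamma> = (\<Prod>s\<in>?X. fact (Poly_Mapping.lookup \<gamma> s))"
    by (rule mfact_superset) auto
  then have "mfact \<gamma> = fact (Poly_Mapping.lookup \<gamma> r) * (\<Prod>s\<in>?X-{r}. fact (Poly_Mapping.lookup \<gamma> s))"
    using prod.remove[OF fX, of r] by simp
  ultimately show ?thesis by (simp add: algebra_simps)
qed

lemma homog_keys: "p \<in> homog n i \<longleftrightarrow> Poly_Mapping.keys p \<subseteq> Mset n i"
  unfolding homog_def Mset_def by auto

lemma subspace_homog: "subspace (homog n i)"
proof -
  have "0 \<in> homog n i" by (simp add: homog_keys)
  moreover have "x + y \<in> homog n i" if "x \<in> homog n i" "y \<in> homog n i" for x y
    using that keys_add[of x y] by (auto simp: homog_keys)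
  moreover have "c *\<^sub>R x \<in> homog n i" if "x \<in> homog n i" for c x
    using that keys_scaleR_pm[of c x] by (auto simp: homog_keys)
  ultimately show ?thesis unfolding subspace_def by blast
qed

lemma monom_homog: "\<alpha> \<in> Mset n i \<Longrightarrow> monom \<alpha> \<in> homog n i"
  unfolding homog_keys keys_monom by simp

lemma homog_span: "homog n i \<subseteq> span (monom ` Mset n i)"
proof
  fix p assume p: "p \<in> homog n i"
  have "(\<Sum>\<alpha>\<in>Poly_Mapping.keys p. Poly_Mapping.lookup p \<alpha> *\<^sub>R monom \<alpha>) \<in> span (monom ` Mset n i)"
  proof (intro real_vector.span_sum real_vector.span_scale real_vector.span_base)
    fix \<alpha> assume "\<alpha> \<in> Poly_Mapping.keys p"
    then show "monom \<alpha> \<in> monom ` Mset n i" using p homog_keys by blast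
  qed
  then show "p \<in> span (monom ` Mset n i)" using pm_expand[of p] by simp
qed

lemma homog_lookup_zero: "p \<in> homog n i \<Longrightarrow> \<alpha> \<notin> Mset n i \<Longrightarrow> Poly_Mapping.lookup p \<alpha> = 0"
  unfolding homog_keys by (auto simp: in_keys_iff)

definition Bf :: "nat \<Rightarrow> nat \<Rightarrow> rpoly \<Rightarrow> rpoly \<Rightarrow> real" where
  "Bf n i q p = (\<Sum>\<alpha>\<in>Mset n i. mfact \<alpha> * Poly_Mapping.lookup q \<alpha> * Poly_Mapping.lookup p \<alpha>)"

lemma Bf_add: "Bf n i (x + y) z = Bf n i x z + Bf n i y z"
  unfolding Bf_def lookup_add by (simp add: algebra_simps sum.distrib)

lemma Bf_scale: "Bf n i (c *\<^sub>R x) z = c * Bf n i x z"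
  unfolding Bf_def lookup_scaleR_pm by (simp add: sum_distrib_left mult_ac)

lemma Bf_sym: "Bf n i x y = Bf n i y x"
  unfolding Bf_def by (simp add: mult_ac)

lemma Bf_zero: "Bf n i 0 z = 0"
  unfolding Bf_def by simp

lemma Bf_pos: assumes "p \<in> homog n i" "p \<noteq> 0" shows "Bf n i p p > 0"
proof -
  obtain a where a: "a \<in> Poly_Mapping.keys p" using assms(2) by (metis keys_eq_empty ex_in_conv)
  then have aM: "a \<in> Mset n i" using assms(1) homog_keys by blast
  have "Poly_Mapping.lookup p a \<noteq> 0" using a by (simp add: in_keys_iff)
  then have "0 < (Poly_Mapping.lookup p a)\<^sup>2" by simp
  then have "0 < mfact a * (Poly_Mapping.lookup p a)\<^sup>2" using mfact_pos[of a] by simp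
  then have "0 < mfact a * Poly_Mapping.lookup p a * Poly_Mapping.lookup p a"
    by (simp add: power2_eq_square mult.assoc)
  moreover have "0 \<le> mfact b * Poly_Mapping.lookup p b * Poly_Mapping.lookup p b" for b
    using mfact_pos[of b] by (simp add: mult.assoc)
  ultimately show ?thesis unfolding Bf_def using finite_Mset aM
    by (intro sum_pos2[of _ a]) auto
qed

lemma Bf_sum_left: "Bf n i (\<Sum>x\<in>X. f x) z = (\<Sum>x\<in>X. Bf n i (f x) z)"
proof (cases "finite X")
  case True then show ?thesis
    by (induction X rule: finite_induct) (simp_all add: Bf_zero Bf_add)
next
  case False then show ?thesis by (simp add: Bf_zero)
qed

lemma Bf_monom: "Bf n i (monom \<gamma>) p = (if \<gamma> \<in> Mset n i then mfact \<gamma> * Poly_Mapping.lookup p \<gamma> else 0)"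
proof -
  have "Bf n i (monom \<gamma>) p = (\<Sum>\<alpha>\<in>Mset n i. if \<alpha> = \<gamma> then mfact \<alpha> * Poly_Mapping.lookup p \<alpha> else 0)"
    unfolding Bf_def lookup_monom by (intro sum.cong) auto
  also have "\<dots> = (if \<gamma> \<in> Mset n i then mfact \<gamma> * Poly_Mapping.lookup p \<gamma> else 0)"
    using sum.delta[OF finite_Mset, of \<gamma> "\<lambda>\<alpha>. mfact \<alpha> * Poly_Mapping.lookup p \<alpha>"] by simp
  finally show ?thesis .
qed

lemma Bf_shift:
  assumes "p \<in> homog n i"
  shows "Bf n i (\<Sum>r\<in>{1..n}. w r *\<^sub>R monom (\<gamma> + ee r)) p
       = mfact \<gamma> * (\<Sum>r\<in>{1..n}. w r * real (Poly_Mapping.lookup \<gamma> r + 1) * Poly_Mapping.lookup p (\<gamma> + ee r))"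
proof -
  have "Bf n i (\<Sum>r\<in>{1..n}. w r *\<^sub>R monom (\<gamma> + ee r)) p = (\<Sum>r\<in>{1..n}. w r * Bf n i (monom (\<gamma> + ee r)) p)"
    unfolding Bf_sum_left Bf_scale ..
  also have "\<dots> = (\<Sum>r\<in>{1..n}. mfact \<gamma> * (w r * real (Poly_Mapping.lookup \<gamma> r + 1) * Poly_Mapping.lookup p (\<gamma> + ee r)))"
  proof (intro sum.cong refl)
    fix r
    show "w r * Bf n i (monom (\<gamma> + ee r)) p = mfact \<gamma> * (w r * real (Poly_Mapping.lookup \<gamma> r + 1) * Poly_Mapping.lookup p (\<gamma> + ee r))"
    proof (cases "\<gamma> + ee r \<in> Mset n i")
      case True then show ?thesis unfolding Bf_monom mfact_add_ee by simp
    next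
      case False then show ?thesis unfolding Bf_monom using homog_lookup_zero[OF assms False] by simp
    qed
  qed
  also have "\<dots> = mfact \<gamma> * (\<Sum>r\<in>{1..n}. w r * real (Poly_Mapping.lookup \<gamma> r + 1) * Poly_Mapping.lookup p (\<gamma> + ee r))"
    by (simp add: sum_distrib_left)
  finally show ?thesis .
qed

lemma inj_add_ee: "inj (\<lambda>\<alpha>::mon. \<alpha> + ee r)"
  by (rule injI) simp

lemma lookup_pd: "Poly_Mapping.lookup (pd r p) \<alpha> = real (Poly_Mapping.lookup \<alpha> r + 1) * Poly_Mapping.lookup p (\<alpha> + ee r)"
proof -
  have "{\<alpha>. real (Poly_Mapping.lookup \<alpha> r + 1) * Poly_Mapping.lookup p (\<alpha> + ee r) \<noteq> 0}
        \<subseteq> (\<lambda>\<alpha>. \<alpha> + ee r) -` Poly_Mapping.keys p"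
    by (auto simp: in_keys_iff)
  moreover have "finite ((\<lambda>\<alpha>. \<alpha> + ee r) -` Poly_Mapping.keys p)"
    using finite_vimageI[OF finite_keys inj_add_ee] .
  ultimately have "finite {\<alpha>. real (Poly_Mapping.lookup \<alpha> r + 1) * Poly_Mapping.lookup p (\<alpha> + ee r) \<noteq> 0}"
    by (rule finite_subset)
  then show ?thesis unfolding pd_def ee_def[symmetric] by simp
qed

lemma pd_pow:
  "\<exists>C::real. C \<noteq> 0 \<and> (\<forall>p. Poly_Mapping.lookup ((pd r ^^ m) p) \<gamma> = C * Poly_Mapping.lookup p (\<gamma> + Poly_Mapping.single r m))"
proof (induction m arbitrary: \<gamma>)
  case 0 then show ?case by (intro exI[of _ 1]) simp
next
  case (Suc m)
  obtain C where C: "C \<noteq> 0" "\<forall>p. Poly_Mapping.lookup ((pd r ^^ m) p) (\<gamma> + ee r) = C * Poly_Mapping.lookup p (\<gamma> + ee r + Poly_Mapping.single r m)"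
    using Suc.IH[of "\<gamma> + ee r"] by blast
  have e: "\<gamma> + ee r + Poly_Mapping.single r m = \<gamma> + Poly_Mapping.single r (Suc m)"
    unfolding ee_def by (simp add: add.assoc single_add[symmetric])
  show ?case
  proof (intro exI[of _ "real (Poly_Mapping.lookup \<gamma> r + 1) * C"] conjI allI)
    show "real (Poly_Mapping.lookup \<gamma> r + 1) * C \<noteq> 0" using C(1) by simp
  next
    fix p
    show "Poly_Mapping.lookup ((pd r ^^ Suc m) p) \<gamma> = real (Poly_Mapping.lookup \<gamma> r + 1) * C * Poly_Mapping.lookup p (\<gamma> + Poly_Mapping.single r (Suc m))"
      using C(2) e by (simp add: lookup_pd)
  qed
qed

lemma fold_pd:
  "\<exists>C::real. C \<noteq> 0 \<and> (\<forall>p. Poly_Mapping.lookup (fold (\<lambda>r q. (pd r ^^ f r) q) xs p) \<gamma>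
      = C * Poly_Mapping.lookup p (\<gamma> + sum_list (map (\<lambda>r. Poly_Mapping.single r (f r)) xs)))"
proof (induction xs arbitrary: \<gamma>)
  case Nil then show ?case by (intro exI[of _ 1]) simp
next
  case (Cons x xs)
  let ?s = "sum_list (map (\<lambda>r. Poly_Mapping.single r (f r)) xs)"
  from Cons.IH[of \<gamma>] obtain C1 where C1': "C1 \<noteq> 0 \<and> (\<forall>p. Poly_Mapping.lookup (fold (\<lambda>r q. (pd r ^^ f r) q) xs p) \<gamma> = C1 * Poly_Mapping.lookup p (\<gamma> + ?s))" ..
  note C1 = conjunct1[OF C1'] conjunct2[OF C1']
  from pd_pow[of "f x" x "\<gamma> + ?s"] obtain C2 where C2': "C2 \<noteq> 0 \<and> (\<forall>p. Poly_Mapping.lookup ((pd x ^^ f x) p) (\<gamma> + ?s) = C2 * Poly_Mapping.lookup p (\<gamma> + ?s + Poly_Mapping.single x (f x)))" ..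
  note C2 = conjunct1[OF C2'] conjunct2[OF C2']
  show ?case
  proof (intro exI[of _ "C1 * C2"] conjI allI)
    show "C1 * C2 \<noteq> 0" using C1(1) C2(1) by simp
  next
    fix p
    have e: "\<gamma> + ?s + Poly_Mapping.single x (f x) = \<gamma> + sum_list (map (\<lambda>r. Poly_Mapping.single r (f r)) (x # xs))"
      by (simp only: list.map sum_list.Cons add.assoc add.commute[of ?s])
    have "Poly_Mapping.lookup (fold (\<lambda>r q. (pd r ^^ f r) q) (x # xs) p) \<gamma>
        = Poly_Mapping.lookup (fold (\<lambda>r q. (pd r ^^ f r) q) xs ((pd x ^^ f x) p)) \<gamma>" by simp
    also have "\<dots> = C1 * Poly_Mapping.lookup ((pd x ^^ f x) p) (\<gamma> + ?s)" using C1(2) by blast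
    also have "\<dots> = C1 * (C2 * Poly_Mapping.lookup p (\<gamma> + ?s + Poly_Mapping.single x (f x)))" using C2(2) by simp
    finally show "Poly_Mapping.lookup (fold (\<lambda>r q. (pd r ^^ f r) q) (x # xs) p) \<gamma> = C1 * C2 * Poly_Mapping.lookup p (\<gamma> + sum_list (map (\<lambda>r. Poly_Mapping.single r (f r)) (x # xs)))"
      using e by simp
  qed
qed

lemma mon_expand: "(\<Sum>r\<in>Poly_Mapping.keys \<beta>. Poly_Mapping.single r (Poly_Mapping.lookup \<beta> r)) = (\<beta>::mon)"
proof (rule poly_mapping_eqI)
  fix s
  have "Poly_Mapping.lookup (\<Sum>r\<in>Poly_Mapping.keys \<beta>. Poly_Mapping.single r (Poly_Mapping.lookup \<beta> r)) s
      = (\<Sum>r\<in>Poly_Mapping.keys \<beta>. if r = s then Poly_Mapping.lookup \<beta> r else 0)"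
    unfolding lookup_sum lookup_single when_def by (intro sum.cong) auto
  also have "\<dots> = Poly_Mapping.lookup \<beta> s"
    using sum.delta[of "Poly_Mapping.keys \<beta>" s "Poly_Mapping.lookup \<beta>"] by (simp add: in_keys_iff)
  finally show "Poly_Mapping.lookup (\<Sum>r\<in>Poly_Mapping.keys \<beta>. Poly_Mapping.single r (Poly_Mapping.lookup \<beta> r)) s = Poly_Mapping.lookup \<beta> s" .
qed

lemma mon_diff_lookup:
  "\<exists>C::real. C \<noteq> 0 \<and> (\<forall>p. Poly_Mapping.lookup (mon_diff \<beta> p) \<gamma> = C * Poly_Mapping.lookup p (\<gamma> + \<beta>))"
proof -
  let ?xs = "sorted_list_of_set (Poly_Mapping.keys \<beta>)"
  have "sum_list (map (\<lambda>r. Poly_Mapping.single r (Poly_Mapping.lookup \<beta> r)) ?xs)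
      = (\<Sum>r\<in>Poly_Mapping.keys \<beta>. Poly_Mapping.single r (Poly_Mapping.lookup \<beta> r))"
    by (subst sum_list_distinct_conv_sum_set) simp_all
  also have "\<dots> = \<beta>" by (rule mon_expand)
  finally have s: "sum_list (map (\<lambda>r. Poly_Mapping.single r (Poly_Mapping.lookup \<beta> r)) ?xs) = \<beta>" .
  show ?thesis unfolding mon_diff_def using fold_pd[of "Poly_Mapping.lookup \<beta>" ?xs \<gamma>] s by simp
qed

definition wsum :: "nat \<Rightarrow> (nat \<Rightarrow> real) \<Rightarrow> rpoly \<Rightarrow> mon \<Rightarrow> real" where
  "wsum n w p \<gamma> = (\<Sum>r\<in>{1..n}. w r * real (Poly_Mapping.lookup \<gamma> r + 1) * Poly_Mapping.lookup p (\<gamma> + ee r))"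

lemma lookup_wsum_pd: "Poly_Mapping.lookup (\<Sum>r\<in>{1..n}. w r *\<^sub>R pd r p) \<gamma> = wsum n w p \<gamma>"
  unfolding lookup_sum lookup_scaleR_pm lookup_pd wsum_def by (simp add: mult.assoc)

lemma pm_zero_iff: "(x::rpoly) = 0 \<longleftrightarrow> (\<forall>\<gamma>. Poly_Mapping.lookup x \<gamma> = 0)"
  by (auto intro: poly_mapping_eqI)

lemma wsum_add: "wsum n w (x + y) \<gamma> = wsum n w x \<gamma> + wsum n w y \<gamma>"
  unfolding wsum_def lookup_add by (simp add: algebra_simps sum.distrib)

lemma wsum_scale: "wsum n w (c *\<^sub>R x) \<gamma> = c * wsum n w x \<gamma>"
  unfolding wsum_def lookup_scaleR_pm by (simp add: sum_distrib_left mult_ac)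

lemma wsum_nz:
  assumes "wsum n w p \<gamma> \<noteq> 0"
  shows "\<exists>r\<in>{1..n}. Poly_Mapping.lookup p (\<gamma> + ee r) \<noteq> 0"
proof (rule ccontr)
  assume "\<not> ?thesis"
  then have "wsum n w p \<gamma> = 0" unfolding wsum_def by (intro sum.neutral) auto
  then show False using assms by simp
qed

lemma sc_down: "simplicial_complex n K \<Longrightarrow> \<sigma> \<in> K \<Longrightarrow> \<tau> \<subseteq> \<sigma> \<Longrightarrow> \<tau> \<in> K"
  unfolding simplicial_complex_def by blast

lemma keys_sub_add_left: "Poly_Mapping.keys (\<beta>::mon) \<subseteq> Poly_Mapping.keys (\<gamma> + \<beta>)"
  by (simp add: keys_add_mon)
lemma keys_sub_add_right: "Poly_Mapping.keys (\<gamma>::mon) \<subseteq> Poly_Mapping.keys (\<gamma> + \<beta>)"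
  by (simp add: keys_add_mon)

lemma stress_char:
  assumes sc: "simplicial_complex n K"
  shows "p \<in> stresses n K d v i \<longleftrightarrow> p \<in> homog n i \<and> (\<forall>\<alpha>\<in>Poly_Mapping.keys p. Poly_Mapping.keys \<alpha> \<in> K)
          \<and> (\<forall>j\<in>{1..d}. \<forall>\<gamma>. wsum n (\<lambda>r. v r j) p \<gamma> = 0)"
proof
  assume p: "p \<in> stresses n K d v i"
  have supp: "\<forall>\<alpha>\<in>Poly_Mapping.keys p. Poly_Mapping.keys \<alpha> \<in> K"
  proof
    fix \<alpha> assume a: "\<alpha> \<in> Poly_Mapping.keys p"
    show "Poly_Mapping.keys \<alpha> \<in> K"
    proof (rule ccontr)
      assume "Poly_Mapping.keys \<alpha> \<notin> K"
      then have md: "mon_diff \<alpha> p = 0" using p unfolding stresses_def by blast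
      from mon_diff_lookup[of \<alpha> 0] obtain C where
        C: "C \<noteq> 0 \<and> (\<forall>p. Poly_Mapping.lookup (mon_diff \<alpha> p) 0 = C * Poly_Mapping.lookup p (0 + \<alpha>))" ..
      then have "C * Poly_Mapping.lookup p \<alpha> = 0" using md by (metis add_0 lookup_zero)
      then have "Poly_Mapping.lookup p \<alpha> = 0" using C by simp
      then show False using a by (simp add: in_keys_iff)
    qed
  qed
  have tcz: "\<forall>j\<in>{1..d}. \<forall>\<gamma>. wsum n (\<lambda>r. v r j) p \<gamma> = 0"
  proof (intro ballI allI)
    fix j \<gamma> assume j: "j \<in> {1..d}"
    then have "(\<Sum>r\<in>{1..n}. v r j *\<^sub>R pd r p) = 0" using p unfolding stresses_def by blast
    then have "Poly_Mapping.lookup (\<Sum>r\<in>{1..n}. v r j *\<^sub>R pd r p) \<gamma> = 0" by simp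
    then show "wsum n (\<lambda>r. v r j) p \<gamma> = 0" unfolding lookup_wsum_pd .
  qed
  have "p \<in> homog n i" using p unfolding stresses_def by blast
  then show "p \<in> homog n i \<and> (\<forall>\<alpha>\<in>Poly_Mapping.keys p. Poly_Mapping.keys \<alpha> \<in> K)
          \<and> (\<forall>j\<in>{1..d}. \<forall>\<gamma>. wsum n (\<lambda>r. v r j) p \<gamma> = 0)" using supp tcz by blast
next
  assume h: "p \<in> homog n i \<and> (\<forall>\<alpha>\<in>Poly_Mapping.keys p. Poly_Mapping.keys \<alpha> \<in> K)
          \<and> (\<forall>j\<in>{1..d}. \<forall>\<gamma>. wsum n (\<lambda>r. v r j) p \<gamma> = 0)"
  have md: "mon_diff \<beta> p = 0" if nk: "Poly_Mapping.keys \<beta> \<notin> K" for \<beta>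
  proof (rule poly_mapping_eqI)
    fix \<gamma>
    from mon_diff_lookup[of \<beta> \<gamma>] obtain C where
      C: "C \<noteq> 0 \<and> (\<forall>p. Poly_Mapping.lookup (mon_diff \<beta> p) \<gamma> = C * Poly_Mapping.lookup p (\<gamma> + \<beta>))" ..
    have "Poly_Mapping.lookup p (\<gamma> + \<beta>) = 0"
    proof (rule ccontr)
      assume "Poly_Mapping.lookup p (\<gamma> + \<beta>) \<noteq> 0"
      then have "\<gamma> + \<beta> \<in> Poly_Mapping.keys p" by (simp add: in_keys_iff)
      then have "Poly_Mapping.keys (\<gamma> + \<beta>) \<in> K" using h by blast
      then have "Poly_Mapping.keys \<beta> \<in> K" using sc_down[OF sc _ keys_sub_add_left] by blast
      then show False using nk by blast
    qed
    then show "Poly_Mapping.lookup (mon_diff \<beta> p) \<gamma> = Poly_Mapping.lookup 0 \<gamma>" using C by simp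
  qed
  have th: "(\<Sum>r\<in>{1..n}. v r j *\<^sub>R pd r p) = 0" if j: "j \<in> {1..d}" for j
    unfolding pm_zero_iff lookup_wsum_pd using h j by blast
  show "p \<in> stresses n K d v i" unfolding stresses_def using h md th by blast
qed

lemma subspace_stresses:
  assumes sc: "simplicial_complex n K"
  shows "subspace (stresses n K d v i)"
proof -
  have "0 \<in> stresses n K d v i" unfolding stress_char[OF sc]
    using subspace_homog[of n i] by (simp add: wsum_def real_vector.subspace_0)
  moreover have "x + y \<in> stresses n K d v i" if "x \<in> stresses n K d v i" "y \<in> stresses n K d v i" for x y
  proof -
    have "x + y \<in> homog n i" using that stress_char[OF sc] subspace_homog[of n i]
      by (meson real_vector.subspace_add)
    moreover have "\<forall>\<alpha>\<in>Poly_Mapping.keys (x + y). Poly_Mapping.keys \<alpha> \<in> K"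
      using that stress_char[OF sc] keys_add[of x y] by blast
    moreover have "\<forall>j\<in>{1..d}. \<forall>\<gamma>. wsum n (\<lambda>r. v r j) (x + y) \<gamma> = 0"
      using that stress_char[OF sc] by (simp add: wsum_add)
    ultimately show ?thesis unfolding stress_char[OF sc] by blast
  qed
  moreover have "c *\<^sub>R x \<in> stresses n K d v i" if "x \<in> stresses n K d v i" for c x
  proof -
    have "c *\<^sub>R x \<in> homog n i" using that stress_char[OF sc] subspace_homog[of n i]
      by (meson real_vector.subspace_scale)
    moreover have "\<forall>\<alpha>\<in>Poly_Mapping.keys (c *\<^sub>R x). Poly_Mapping.keys \<alpha> \<in> K"
      using that stress_char[OF sc] keys_scaleR_pm[of c x] by blast
    moreover have "\<forall>j\<in>{1..d}. \<forall>\<gamma>. wsum n (\<lambda>r. v r j) (c *\<^sub>R x) \<gamma> = 0"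
      using that stress_char[OF sc] by (simp add: wsum_scale)
    ultimately show ?thesis unfolding stress_char[OF sc] by blast
  qed
  ultimately show ?thesis unfolding subspace_def by blast
qed

lemma stresses_mono:
  assumes "simplicial_complex n D" "simplicial_complex n S" "D \<subseteq> S"
  shows "stresses n D d v i \<subseteq> stresses n S d v i"
  using assms stress_char[OF assms(1)] stress_char[OF assms(2)] by blast

lemma stresses_homog: "stresses n K d v i \<subseteq> homog n i"
  unfolding stresses_def by blast

definition Lop :: "nat \<Rightarrow> rpoly \<Rightarrow> rpoly \<Rightarrow> rpoly" where
  "Lop n l p = (\<Sum>r\<in>{1..n}. Poly_Mapping.lookup l (ee r) *\<^sub>R pd r p)"

lemma lookup_Lop: "Poly_Mapping.lookup (Lop n l p) \<gamma> = wsum n (\<lambda>r. Poly_Mapping.lookup l (ee r)) p \<gamma>"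
  unfolding Lop_def by (rule lookup_wsum_pd)

lemma linear_Lop: "linear (Lop n l)"
proof (rule linearI)
  fix a b show "Lop n l (a + b) = Lop n l a + Lop n l b"
    by (rule poly_mapping_eqI) (simp add: lookup_Lop lookup_add wsum_add)
next
  fix c a show "Lop n l (c *\<^sub>R a) = c *\<^sub>R Lop n l a"
    by (rule poly_mapping_eqI) (simp add: lookup_Lop lookup_scaleR_pm wsum_scale)
qed

lemma lookup_add_ee: "Poly_Mapping.lookup (\<gamma> + ee s) r = Poly_Mapping.lookup \<gamma> r + (if r = s then 1 else 0)"
  by (simp add: lookup_add lookup_ee)

lemma coef_ident:
  "real (Poly_Mapping.lookup \<gamma> s + 1) * real (Poly_Mapping.lookup (\<gamma> + ee s) r + 1)
   = real (Poly_Mapping.lookup \<gamma> r + 1) * real (Poly_Mapping.lookup (\<gamma> + ee r) s + 1)"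
  by (cases "r = s") (simp_all add: lookup_add_ee)

lemma term_eq:
  "a * (real (Poly_Mapping.lookup \<gamma> s + 1) * real (Poly_Mapping.lookup (\<gamma> + ee s) r + 1)) * Poly_Mapping.lookup p (\<gamma> + ee s + ee r)
 = a * (real (Poly_Mapping.lookup \<gamma> r + 1) * real (Poly_Mapping.lookup (\<gamma> + ee r) s + 1)) * Poly_Mapping.lookup p (\<gamma> + ee r + ee s)"
proof -
  have e: "\<gamma> + ee s + ee r = \<gamma> + ee r + ee s" by (simp add: add_ac)
  show ?thesis by (simp only: coef_ident[of \<gamma> s r] e)
qed

lemma wsum_Lop:
  "wsum n w (Lop n l p) \<gamma> = (\<Sum>r\<in>{1..n}. Poly_Mapping.lookup l (ee r) * real (Poly_Mapping.lookup \<gamma> r + 1) * wsum n w p (\<gamma> + ee r))"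
proof -
  let ?l = "\<lambda>r. Poly_Mapping.lookup l (ee r)"
  let ?c = "\<lambda>\<gamma> r. real (Poly_Mapping.lookup \<gamma> r + 1)"
  have "wsum n w (Lop n l p) \<gamma> = (\<Sum>s\<in>{1..n}. \<Sum>r\<in>{1..n}. w s * ?l r * (?c \<gamma> s * ?c (\<gamma> + ee s) r) * Poly_Mapping.lookup p (\<gamma> + ee s + ee r))"
    unfolding wsum_def lookup_Lop by (simp add: sum_distrib_left mult_ac)
  also have "\<dots> = (\<Sum>r\<in>{1..n}. \<Sum>s\<in>{1..n}. w s * ?l r * (?c \<gamma> s * ?c (\<gamma> + ee s) r) * Poly_Mapping.lookup p (\<gamma> + ee s + ee r))"
    by (rule sum.swap)
  also have "\<dots> = (\<Sum>r\<in>{1..n}. \<Sum>s\<in>{1..n}. w s * ?l r * (?c \<gamma> r * ?c (\<gamma> + ee r) s) * Poly_Mapping.lookup p (\<gamma> + ee r + ee s))"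
    by (intro sum.cong refl) (rule term_eq)
  also have "\<dots> = (\<Sum>r\<in>{1..n}. ?l r * ?c \<gamma> r * wsum n w p (\<gamma> + ee r))"
    unfolding wsum_def by (simp add: sum_distrib_left mult_ac)
  finally show ?thesis .
qed

lemma Lop_stress:
  assumes sc: "simplicial_complex n K" and p: "p \<in> stresses n K d v (Suc i)"
  shows "Lop n l p \<in> stresses n K d v i"
proof -
  have ph: "p \<in> homog n (Suc i)" and ps: "\<forall>\<alpha>\<in>Poly_Mapping.keys p. Poly_Mapping.keys \<alpha> \<in> K"
    and pt: "\<forall>j\<in>{1..d}. \<forall>\<gamma>. wsum n (\<lambda>r. v r j) p \<gamma> = 0"
    using p stress_char[OF sc] by blast+
  have k: "\<gamma> \<in> Mset n i \<and> Poly_Mapping.keys \<gamma> \<in> K" if "\<gamma> \<in> Poly_Mapping.keys (Lop n l p)" for \<gamma>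
  proof -
    have "wsum n (\<lambda>r. Poly_Mapping.lookup l (ee r)) p \<gamma> \<noteq> 0"
      using that by (simp add: in_keys_iff lookup_Lop)
    then obtain r where r: "r \<in> {1..n}" "Poly_Mapping.lookup p (\<gamma> + ee r) \<noteq> 0" using wsum_nz by blast
    then have g: "\<gamma> + ee r \<in> Poly_Mapping.keys p" by (simp add: in_keys_iff)
    then have "\<gamma> + ee r \<in> Mset n (Suc i)" using ph homog_keys by blast
    then have "\<gamma> \<in> Mset n i" by (rule Mset_add_ee_D)
    moreover have "Poly_Mapping.keys \<gamma> \<in> K" using ps g sc_down[OF sc _ keys_sub_add_right] by blast
    ultimately show ?thesis by blast
  qed
  have "Lop n l p \<in> homog n i" unfolding homog_keys using k by blast
  moreover have "\<forall>\<alpha>\<in>Poly_Mapping.keys (Lop n l p). Poly_Mapping.keys \<alpha> \<in> K" using k by blast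
  moreover have "\<forall>j\<in>{1..d}. \<forall>\<gamma>. wsum n (\<lambda>r. v r j) (Lop n l p) \<gamma> = 0"
    unfolding wsum_Lop using pt by simp
  ultimately show ?thesis unfolding stress_char[OF sc] by blast
qed

lemma ee_inj: "ee r = ee s \<longleftrightarrow> r = s"
proof
  assume "ee r = ee s"
  then have "Poly_Mapping.lookup (ee r) r = Poly_Mapping.lookup (ee s) r" by simp
  then show "r = s" by (simp add: lookup_ee split: if_splits)
qed simp

lemma l_expand:
  assumes "l \<in> homog n 1"
  shows "l = (\<Sum>r\<in>{1..n}. Poly_Mapping.lookup l (ee r) *\<^sub>R monom (ee r))"
proof (rule poly_mapping_eqI)
  fix \<alpha>
  have "Poly_Mapping.lookup (\<Sum>r\<in>{1..n}. Poly_Mapping.lookup l (ee r) *\<^sub>R monom (ee r)) \<alpha>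
      = (\<Sum>r\<in>{1..n}. if \<alpha> = ee r then Poly_Mapping.lookup l \<alpha> else 0)"
    unfolding lookup_sum lookup_scaleR_pm lookup_monom by (intro sum.cong) auto
  also have "\<dots> = Poly_Mapping.lookup l \<alpha>"
  proof (cases "\<alpha> \<in> Poly_Mapping.keys l")
    case True
    then have "\<alpha> \<in> Mset n 1" using assms homog_keys by blast
    then have m: "mdeg \<alpha> = 1" "Poly_Mapping.keys \<alpha> \<subseteq> {1..n}" unfolding Mset_def by auto
    obtain r0 where r0: "\<alpha> = ee r0" using mdeg_one[OF m(1)] by blast
    then have r0n: "r0 \<in> {1..n}" using m(2) keys_ee by auto
    have "(\<Sum>r\<in>{1..n}. if \<alpha> = ee r then Poly_Mapping.lookup l \<alpha> else 0)
        = (\<Sum>r\<in>{1..n}. if r = r0 then Poly_Mapping.lookup l \<alpha> else 0)"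
      using r0 ee_inj by (intro sum.cong) auto
    also have "\<dots> = Poly_Mapping.lookup l \<alpha>" using r0n by simp
    finally show ?thesis .
  next
    case False
    then have z: "Poly_Mapping.lookup l \<alpha> = 0" by (simp add: in_keys_iff)
    have "(\<Sum>r\<in>{1..n}. if \<alpha> = ee r then Poly_Mapping.lookup l \<alpha> else 0) = 0"
      using z by (intro sum.neutral) auto
    then show ?thesis using z by simp
  qed
  finally show "Poly_Mapping.lookup l \<alpha> = Poly_Mapping.lookup (\<Sum>r\<in>{1..n}. Poly_Mapping.lookup l (ee r) *\<^sub>R monom (ee r)) \<alpha>"
    by simp
qed

lemma sum_mult_monom:
  "(\<Sum>r\<in>R. w r *\<^sub>R monom (ee r)) * monom \<gamma> = (\<Sum>r\<in>R. w r *\<^sub>R monom (\<gamma> + ee r))"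
  by (simp add: sum_distrib_right scaleR_mult_left_pm monom_mult add.commute)

lemma monom_mult_sum:
  "monom \<gamma> * (\<Sum>r\<in>R. w r *\<^sub>R monom (ee r)) = (\<Sum>r\<in>R. w r *\<^sub>R monom (\<gamma> + ee r))"
  by (simp add: sum_distrib_left scaleR_mult_right_pm monom_mult)

lemma lmul_monom:
  assumes "l \<in> homog n 1"
  shows "l * monom \<gamma> = (\<Sum>r\<in>{1..n}. Poly_Mapping.lookup l (ee r) *\<^sub>R monom (\<gamma> + ee r))"
proof -
  have "l * monom \<gamma> = (\<Sum>r\<in>{1..n}. Poly_Mapping.lookup l (ee r) *\<^sub>R monom (ee r)) * monom \<gamma>"
    using l_expand[OF assms] by simp
  also have "\<dots> = (\<Sum>r\<in>{1..n}. Poly_Mapping.lookup l (ee r) *\<^sub>R monom (\<gamma> + ee r))"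
    by (rule sum_mult_monom)
  finally show ?thesis .
qed

lemma lmul_expand:
  "l * q = (\<Sum>\<gamma>\<in>Poly_Mapping.keys q. Poly_Mapping.lookup q \<gamma> *\<^sub>R (l * monom \<gamma>))"
proof -
  let ?E = "\<Sum>\<gamma>\<in>Poly_Mapping.keys q. Poly_Mapping.lookup q \<gamma> *\<^sub>R monom \<gamma>"
  have qE: "?E = q" by (rule pm_expand[symmetric])
  have "l * ?E = (\<Sum>\<gamma>\<in>Poly_Mapping.keys q. Poly_Mapping.lookup q \<gamma> *\<^sub>R (l * monom \<gamma>))"
    by (simp add: sum_distrib_left scaleR_mult_right_pm)
  then show ?thesis by (simp only: qE)
qed

lemma lmul_homog:
  assumes l: "l \<in> homog n 1" and q: "q \<in> homog n i"
  shows "l * q \<in> homog n (Suc i)"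
proof -
  have "(\<Sum>\<gamma>\<in>Poly_Mapping.keys q. Poly_Mapping.lookup q \<gamma> *\<^sub>R (l * monom \<gamma>)) \<in> homog n (Suc i)"
  proof (intro real_vector.subspace_sum[OF subspace_homog] real_vector.subspace_scale[OF subspace_homog])
    fix \<gamma> assume g: "\<gamma> \<in> Poly_Mapping.keys q"
    then have gM: "\<gamma> \<in> Mset n i" using q homog_keys by blast
    show "l * monom \<gamma> \<in> homog n (Suc i)" unfolding lmul_monom[OF l]
    proof (intro real_vector.subspace_sum[OF subspace_homog] real_vector.subspace_scale[OF subspace_homog])
      fix r assume "r \<in> {1..n}"
      then show "monom (\<gamma> + ee r) \<in> homog n (Suc i)" using monom_homog Mset_add_ee gM by blast
    qed
  qed
  then show ?thesis using lmul_expand[of l q] by simp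
qed

lemma adjoint:
  assumes l: "l \<in> homog n 1" and q: "q \<in> homog n i" and p: "p \<in> homog n (Suc i)"
  shows "Bf n i q (Lop n l p) = Bf n (Suc i) (l * q) p"
proof -
  let ?E = "\<Sum>\<gamma>\<in>Poly_Mapping.keys q. Poly_Mapping.lookup q \<gamma> *\<^sub>R monom \<gamma>"
  let ?w = "\<lambda>r. Poly_Mapping.lookup l (ee r)"
  have qE: "?E = q" by (rule pm_expand[symmetric])
  have "Bf n i ?E (Lop n l p) = (\<Sum>\<gamma>\<in>Poly_Mapping.keys q. Poly_Mapping.lookup q \<gamma> * (mfact \<gamma> * wsum n ?w p \<gamma>))"
    unfolding Bf_sum_left Bf_scale
  proof (intro sum.cong refl)
    fix \<gamma> assume "\<gamma> \<in> Poly_Mapping.keys q"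
    then have "\<gamma> \<in> Mset n i" using q homog_keys by blast
    then show "Poly_Mapping.lookup q \<gamma> * Bf n i (monom \<gamma>) (Lop n l p) = Poly_Mapping.lookup q \<gamma> * (mfact \<gamma> * wsum n ?w p \<gamma>)"
      unfolding Bf_monom lookup_Lop by simp
  qed
  moreover have "Bf n (Suc i) (\<Sum>\<gamma>\<in>Poly_Mapping.keys q. Poly_Mapping.lookup q \<gamma> *\<^sub>R (l * monom \<gamma>)) p
      = (\<Sum>\<gamma>\<in>Poly_Mapping.keys q. Poly_Mapping.lookup q \<gamma> * (mfact \<gamma> * wsum n ?w p \<gamma>))"
    unfolding Bf_sum_left Bf_scale
  proof (intro sum.cong refl)
    fix \<gamma>
    show "Poly_Mapping.lookup q \<gamma> * Bf n (Suc i) (l * monom \<gamma>) p = Poly_Mapping.lookup q \<gamma> * (mfact \<gamma> * wsum n ?w p \<gamma>)"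
      unfolding lmul_monom[OF l] Bf_shift[OF p] wsum_def ..
  qed
  ultimately show ?thesis using qE lmul_expand[of l q] by simp
qed

lemma ideal_gen_zero: "0 \<in> ideal_gen G"
  unfolding ideal_gen_def by (intro CollectI exI[of _ "{}"]) simp

lemma ideal_gen_gen: "g \<in> G \<Longrightarrow> c * g \<in> ideal_gen G"
  unfolding ideal_gen_def by (intro CollectI exI[of _ "{g}"] exI[of _ "\<lambda>_. c"]) simp

lemma ideal_gen_add:
  assumes "a \<in> ideal_gen G" "b \<in> ideal_gen G"
  shows "a + b \<in> ideal_gen G"
proof -
  obtain F1 c1 where 1: "finite F1" "F1 \<subseteq> G" "a = (\<Sum>g\<in>F1. c1 g * g)" using assms(1) unfolding ideal_gen_def by blast
  obtain F2 c2 where 2: "finite F2" "F2 \<subseteq> G" "b = (\<Sum>g\<in>F2. c2 g * g)" using assms(2) unfolding ideal_gen_def by blast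
  let ?F = "F1 \<union> F2"
  define c where "c g = (if g \<in> F1 then c1 g else 0) + (if g \<in> F2 then c2 g else 0)" for g
  have fF: "finite ?F" using 1 2 by simp
  have "(\<Sum>g\<in>?F. c g * g) = (\<Sum>g\<in>?F. (if g \<in> F1 then c1 g * g else 0)) + (\<Sum>g\<in>?F. (if g \<in> F2 then c2 g * g else 0))"
  proof -
    have "c g * g = (if g \<in> F1 then c1 g * g else 0) + (if g \<in> F2 then c2 g * g else 0)" for g
      unfolding c_def by (simp add: distrib_right)
    then show ?thesis by (simp add: sum.distrib)
  qed
  also have "(\<Sum>g\<in>?F. (if g \<in> F1 then c1 g * g else 0)) = (\<Sum>g\<in>F1. c1 g * g)"
    using sum.inter_restrict[OF fF, of "\<lambda>g. c1 g * g" F1] by (simp add: Int_absorb1)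
  also have "(\<Sum>g\<in>?F. (if g \<in> F2 then c2 g * g else 0)) = (\<Sum>g\<in>F2. c2 g * g)"
    using sum.inter_restrict[OF fF, of "\<lambda>g. c2 g * g" F2] by (simp add: Int_absorb1)
  finally have "a + b = (\<Sum>g\<in>?F. c g * g)" using 1 2 by simp
  then show ?thesis unfolding ideal_gen_def using fF 1(2) 2(2)
    by (intro CollectI exI[of _ ?F] exI[of _ c]) simp
qed

lemma ideal_gen_scale:
  assumes "a \<in> ideal_gen G"
  shows "c *\<^sub>R a \<in> ideal_gen G"
proof -
  obtain F1 c1 where 1: "finite F1" "F1 \<subseteq> G" "a = (\<Sum>g\<in>F1. c1 g * g)" using assms(1) unfolding ideal_gen_def by blast
  have "c *\<^sub>R a = (\<Sum>g\<in>F1. (c *\<^sub>R c1 g) * g)" using 1(3) by (simp add: scaleR_sum_right scaleR_mult_left_pm)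
  then show ?thesis unfolding ideal_gen_def using 1
    by (intro CollectI exI[of _ F1] exI[of _ "\<lambda>g. c *\<^sub>R c1 g"]) simp
qed

lemma subspace_AJ_homog: "subspace (AJ n K d v \<inter> homog n i)"
proof -
  have "0 \<in> AJ n K d v \<inter> homog n i" unfolding AJ_def
    using ideal_gen_zero subspace_homog[of n i] real_vector.subspace_0 by blast
  moreover have "x + y \<in> AJ n K d v \<inter> homog n i" if "x \<in> AJ n K d v \<inter> homog n i" "y \<in> AJ n K d v \<inter> homog n i" for x y
    using that ideal_gen_add[of x _ y] subspace_homog[of n i] real_vector.subspace_add unfolding AJ_def by blast
  moreover have "c *\<^sub>R x \<in> AJ n K d v \<inter> homog n i" if "x \<in> AJ n K d v \<inter> homog n i" for c x
    using that ideal_gen_scale[of x _ c] subspace_homog[of n i] real_vector.subspace_scale unfolding AJ_def by blast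
  ultimately show ?thesis unfolding subspace_def by blast
qed

lemma theta_expand: "theta n v j = (\<Sum>r\<in>{1..n}. v r j *\<^sub>R monom (ee r))"
  unfolding theta_def var_ee ..

lemma Bf_gen_zero:
  assumes sc: "simplicial_complex n S" and p: "p \<in> stresses n S d v i"
    and g: "g \<in> {monom \<beta> | \<beta>. Poly_Mapping.keys \<beta> \<subseteq> {1..n} \<and> Poly_Mapping.keys \<beta> \<notin> S} \<union> {theta n v j | j. j \<in> {1..d}}"
  shows "Bf n i (monom \<gamma> * g) p = 0"
proof -
  have ph: "p \<in> homog n i" and ps: "\<forall>\<alpha>\<in>Poly_Mapping.keys p. Poly_Mapping.keys \<alpha> \<in> S"
    and pt: "\<forall>j\<in>{1..d}. \<forall>\<gamma>. wsum n (\<lambda>r. v r j) p \<gamma> = 0"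
    using p stress_char[OF sc] by blast+
  from g show ?thesis
  proof
    assume "g \<in> {monom \<beta> | \<beta>. Poly_Mapping.keys \<beta> \<subseteq> {1..n} \<and> Poly_Mapping.keys \<beta> \<notin> S}"
    then obtain \<beta> where b: "g = monom \<beta>" "Poly_Mapping.keys \<beta> \<notin> S" by blast
    have "Poly_Mapping.lookup p (\<gamma> + \<beta>) = 0"
    proof (rule ccontr)
      assume "Poly_Mapping.lookup p (\<gamma> + \<beta>) \<noteq> 0"
      then have "Poly_Mapping.keys (\<gamma> + \<beta>) \<in> S" using ps by (simp add: in_keys_iff)
      then have "Poly_Mapping.keys \<beta> \<in> S" using sc_down[OF sc _ keys_sub_add_left] by blast
      then show False using b by blast
    qed
    then show ?thesis unfolding b monom_mult Bf_monom by simp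
  next
    assume "g \<in> {theta n v j | j. j \<in> {1..d}}"
    then obtain j where j: "g = theta n v j" "j \<in> {1..d}" by blast
    show ?thesis unfolding j(1) theta_expand monom_mult_sum Bf_shift[OF ph]
      using pt j(2) unfolding wsum_def by simp
  qed
qed

lemma Ann1:
  assumes sc: "simplicial_complex n S" and p: "p \<in> stresses n S d v i" and q: "q \<in> AJ n S d v"
  shows "Bf n i q p = 0"
proof -
  let ?G = "{monom \<beta> | \<beta>. Poly_Mapping.keys \<beta> \<subseteq> {1..n} \<and> Poly_Mapping.keys \<beta> \<notin> S} \<union> {theta n v j | j. j \<in> {1..d}}"
  obtain F c where F: "finite F" "F \<subseteq> ?G" "q = (\<Sum>g\<in>F. c g * g)"
    using q unfolding AJ_def ideal_gen_def by blast
  have "Bf n i (c g * g) p = 0" if g: "g \<in> ?G" for g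
  proof -
    let ?E = "\<Sum>\<gamma>\<in>Poly_Mapping.keys (c g). Poly_Mapping.lookup (c g) \<gamma> *\<^sub>R monom \<gamma>"
    have qE: "?E = c g" by (rule pm_expand[symmetric])
    have "Bf n i (?E * g) p = (\<Sum>\<gamma>\<in>Poly_Mapping.keys (c g). Poly_Mapping.lookup (c g) \<gamma> * Bf n i (monom \<gamma> * g) p)"
      by (simp add: sum_distrib_right scaleR_mult_left_pm Bf_sum_left Bf_scale)
    also have "\<dots> = 0" using Bf_gen_zero[OF sc p g] by simp
    finally show ?thesis by (simp only: qE)
  qed
  note gz = this
  have "Bf n i q p = (\<Sum>g\<in>F. Bf n i (c g * g) p)" using F(3) by (simp add: Bf_sum_left)
  also have "\<dots> = 0" using F(2) gz by (intro sum.neutral) blast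
  finally show ?thesis .
qed

lemma Ann2:
  assumes sc: "simplicial_complex n S" and ph: "p \<in> homog n i"
    and orth: "\<forall>q\<in>AJ n S d v \<inter> homog n i. Bf n i q p = 0"
  shows "p \<in> stresses n S d v i"
proof -
  have ps: "\<forall>\<alpha>\<in>Poly_Mapping.keys p. Poly_Mapping.keys \<alpha> \<in> S"
  proof
    fix \<alpha> assume a: "\<alpha> \<in> Poly_Mapping.keys p"
    then have aM: "\<alpha> \<in> Mset n i" using ph homog_keys by blast
    show "Poly_Mapping.keys \<alpha> \<in> S"
    proof (rule ccontr)
      assume "Poly_Mapping.keys \<alpha> \<notin> S"
      moreover have "Poly_Mapping.keys \<alpha> \<subseteq> {1..n}" using aM unfolding Mset_def by blast
      ultimately have "monom \<alpha> \<in> {monom \<beta> | \<beta>. Poly_Mapping.keys \<beta> \<subseteq> {1..n} \<and> Poly_Mapping.keys \<beta> \<notin> S} \<union> {theta n v j | j. j \<in> {1..d}}"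
        by blast
      then have "1 * monom \<alpha> \<in> AJ n S d v" unfolding AJ_def by (rule ideal_gen_gen)
      then have "monom \<alpha> \<in> AJ n S d v" by simp
      moreover have "monom \<alpha> \<in> homog n i" using monom_homog[OF aM] .
      ultimately have "Bf n i (monom \<alpha>) p = 0" using orth by blast
      then have "mfact \<alpha> * Poly_Mapping.lookup p \<alpha> = 0" unfolding Bf_monom using aM by simp
      then show False using a mfact_pos[of \<alpha>] by (simp add: in_keys_iff)
    qed
  qed
  have pt: "\<forall>j\<in>{1..d}. \<forall>\<gamma>. wsum n (\<lambda>r. v r j) p \<gamma> = 0"
  proof (intro ballI allI)
    fix j \<gamma> assume j: "j \<in> {1..d}"
    show "wsum n (\<lambda>r. v r j) p \<gamma> = 0"
    proof (rule ccontr)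
      assume nz: "wsum n (\<lambda>r. v r j) p \<gamma> \<noteq> 0"
      then obtain r where r: "r \<in> {1..n}" "Poly_Mapping.lookup p (\<gamma> + ee r) \<noteq> 0" using wsum_nz by blast
      then have "\<gamma> + ee r \<in> Mset n i" using ph homog_keys by (auto simp: in_keys_iff)
      then have "mdeg \<gamma> + 1 = i" "Poly_Mapping.keys \<gamma> \<subseteq> {1..n}"
        unfolding Mset_def by (auto simp: mdeg_add mdeg_ee keys_add_mon)
      then have gM: "\<gamma> \<in> Mset n (i - 1)" and i: "i = Suc (i - 1)" unfolding Mset_def by auto
      have "monom \<gamma> * theta n v j \<in> AJ n S d v" unfolding AJ_def using j
        by (intro ideal_gen_gen) blast
      moreover have "monom \<gamma> * theta n v j \<in> homog n i"
        unfolding theta_expand monom_mult_sum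
      proof (intro real_vector.subspace_sum[OF subspace_homog] real_vector.subspace_scale[OF subspace_homog])
        fix s assume "s \<in> {1..n}"
        then show "monom (\<gamma> + ee s) \<in> homog n i" using monom_homog Mset_add_ee[OF gM] i by metis
      qed
      ultimately have "Bf n i (monom \<gamma> * theta n v j) p = 0" using orth by blast
      then have "mfact \<gamma> * wsum n (\<lambda>r. v r j) p \<gamma> = 0"
        unfolding theta_expand monom_mult_sum Bf_shift[OF ph] wsum_def by simp
      then show False using nz mfact_pos[of \<gamma>] by simp
    qed
  qed
  show ?thesis unfolding stress_char[OF sc] using ph ps pt by blast
qed

lemma homog_fd: "homog n i \<subseteq> span (monom ` Mset n i)" "finite (monom ` Mset n i)"
  using homog_span finite_Mset by auto

lemma bilf_homog: "bilf (homog n i) (Bf n i) (monom ` Mset n i)"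
  by (unfold_locales) (simp_all add: subspace_homog homog_fd Bf_add Bf_scale Bf_pos Bf_sym[of n i])

theorem mainTheorem8:
  fixes n k :: nat and S D :: "nat set set" and v :: "nat \<Rightarrow> nat \<Rightarrow> real"
  assumes "rational_sphere n k S"
    and "is_lsop n S (2*k+1) v"
    and "hard_lefschetz n S (2*k+1) v"
    and "simplicial_complex n D" and "D \<subseteq> S"
  shows "kappa n S D (2*k+1) v k \<le> kappa n S D (2*k+1) v (k+1)"
proof -
  define d where "d = 2*k+1"
  have scS: "simplicial_complex n S"
    using assms(1) unfolding rational_sphere_def homology_manifold_def by blast
  have scD: "simplicial_complex n D" by (rule assms(4))
  from assms(3) obtain l where l: "l \<in> homog n 1"
    and hlall: "\<forall>j. 2*j \<le> 2*k+1 \<longrightarrow>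
     (\<forall>p\<in>homog n j. l ^ (2*k+1 - 2*j) * p \<in> AJ n S (2*k+1) v \<longrightarrow> p \<in> AJ n S (2*k+1) v) \<and>
     (\<forall>q\<in>homog n (2*k+1 - j). \<exists>p\<in>homog n j. q - l ^ (2*k+1 - 2*j) * p \<in> AJ n S (2*k+1) v)"
    unfolding hard_lefschetz_def by blast
  have "2*k \<le> 2*k+1" by simp
  then have hl0: "\<forall>p\<in>homog n k. l ^ (2*k+1 - 2*k) * p \<in> AJ n S (2*k+1) v \<longrightarrow> p \<in> AJ n S (2*k+1) v"
    using spec[OF hlall, of k] by blast
  have hl: "\<forall>p\<in>homog n k. l * p \<in> AJ n S d v \<longrightarrow> p \<in> AJ n S d v"
    using hl0 unfolding d_def by simp
  interpret B1: bilf "homog n k" "Bf n k" "monom ` Mset n k" by (rule bilf_homog)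
  interpret B2: bilf "homog n (Suc k)" "Bf n (Suc k)" "monom ` Mset n (Suc k)" by (rule bilf_homog)
  let ?AS = "stresses n S d v" and ?AD = "stresses n D d v" and ?L = "Lop n l"
  have linL: "linear ?L" by (rule linear_Lop)
  have img_sub: "?L ` ?AS (Suc k) \<subseteq> ?AS k" using Lop_stress[OF scS] by blast
  have surj: "?AS k \<subseteq> ?L ` ?AS (Suc k)"
  proof (rule ccontr)
    assume ns: "\<not> ?AS k \<subseteq> ?L ` ?AS (Suc k)"
    have sV: "subspace (?L ` ?AS (Suc k))"
      by (rule real_vector.linear_subspace_image[OF linL subspace_stresses[OF scS]])
    obtain q where q: "q \<in> ?AS k" "q \<noteq> 0" "\<forall>w\<in>?L ` ?AS (Suc k). Bf n k q w = 0"
      using B1.orth_exists[OF subspace_stresses[OF scS] sV img_sub stresses_homog ns] by blast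
    have qH: "q \<in> homog n k" using q(1) stresses_homog by blast
    have lqH: "l * q \<in> homog n (Suc k)" by (rule lmul_homog[OF l qH])
    have "l * q \<in> AJ n S d v \<inter> homog n (Suc k)"
    proof (rule B2.double_ann[OF subspace_AJ_homog _ lqH])
      show "AJ n S d v \<inter> homog n (Suc k) \<subseteq> homog n (Suc k)" by blast
      show "\<forall>p\<in>homog n (Suc k). (\<forall>w\<in>AJ n S d v \<inter> homog n (Suc k). Bf n (Suc k) w p = 0) \<longrightarrow> Bf n (Suc k) (l * q) p = 0"
      proof (intro ballI impI)
        fix p assume pH: "p \<in> homog n (Suc k)" and o: "\<forall>w\<in>AJ n S d v \<inter> homog n (Suc k). Bf n (Suc k) w p = 0"
        have pS: "p \<in> ?AS (Suc k)" by (rule Ann2[OF scS pH o])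
        have "Bf n (Suc k) (l * q) p = Bf n k q (?L p)" using adjoint[OF l qH pH] by simp
        also have "\<dots> = 0" using q(3) pS by blast
        finally show "Bf n (Suc k) (l * q) p = 0" .
      qed
    qed
    then have "q \<in> AJ n S d v" using hl qH by blast
    then have "Bf n k q q = 0" using Ann1[OF scS q(1)] by blast
    then show False using Bf_pos[OF qH q(2)] by simp
  qed
  have surjE: "?L ` ?AS (Suc k) = ?AS k" using img_sub surj by blast
  have fdS: "?AS i \<subseteq> span (monom ` Mset n i)" for i using stresses_homog homog_fd by blast
  have fdD: "?AD i \<subseteq> span (monom ` Mset n i)" for i using stresses_homog homog_fd by blast
  have fin: "finite (monom ` Mset n i)" for i using homog_fd by blast
  have rnW: "dim (?AS (Suc k)) = dim (?AS k) + dim {x\<in>?AS (Suc k). ?L x = 0}"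
    using rank_nullity[OF fdS fin subspace_stresses[OF scS] linL] surjE by simp
  have rnU: "dim (?AD (Suc k)) \<le> dim (?L ` ?AD (Suc k)) + dim {x\<in>?AD (Suc k). ?L x = 0}"
    by (rule rank_nullity_le[OF fdD fin subspace_stresses[OF scD] linL])
  have m1: "dim (?L ` ?AD (Suc k)) \<le> dim (?AD k)"
    using fd_dim_mono[OF fdD[of k] fin[of k], of "?L ` ?AD (Suc k)"] Lop_stress[OF scD] by blast
  have kerfd: "{x\<in>?AS (Suc k). ?L x = 0} \<subseteq> span (monom ` Mset n (Suc k))" using fdS by blast
  have m2: "dim {x\<in>?AD (Suc k). ?L x = 0} \<le> dim {x\<in>?AS (Suc k). ?L x = 0}"
  proof -
    have "{x\<in>?AD (Suc k). ?L x = 0} \<subseteq> {x\<in>?AS (Suc k). ?L x = 0}"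
      using stresses_mono[OF scD scS assms(5), of d v "Suc k"] by blast
    then show ?thesis by (rule fd_dim_mono[OF kerfd fin])
  qed
  have m3: "dim (?AD k) \<le> dim (?AS k)"
    by (rule fd_dim_mono[OF fdS fin stresses_mono[OF scD scS assms(5)]])
  have m4: "dim (?AD (Suc k)) \<le> dim (?AS (Suc k))"
    by (rule fd_dim_mono[OF fdS fin stresses_mono[OF scD scS assms(5)]])
  show ?thesis unfolding kappa_def d_def[symmetric] using rnW rnU m1 m2 m3 m4 by simp
qed

end
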